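(* Let $\chi\in\sum_{1\leq s\leq r-1}\mathcal B\otimes\land^sW\otimes\land^{r-s}W$ for some $r\geq3$. If $\alpha(\chi)+\beta(\chi)=\gamma(\chi)+\delta(\chi)$, then $\chi=\sum_I b_I(S_I-w_I-w'_I)$ for suitable $b_I\in\mathcal B$, where the sum runs over strictly increasing sequences $I=(i_1<i_2<\cdots<i_r)$ of indices.
   Context: $\mathcal B$ is a graded commutative algebra over $\mathbb Q$ and $W$ a graded rational vector space concentrated in odd degrees with basis $\{w_i\}$ indexed by a totally ordered set. In $\mathcal B\otimes\land W\otimes\land W$ write $w=1\otimes w\otimes 1$, $w'=1\otimes1\otimes w$, and in $\mathcal B\otimes\land W\otimes\land W\otimes\land W$ write $w,w',w''$ for $w$ in the first, second, third copy. Define algebra maps $\alpha,\beta,\gamma,\delta\colon\mathcal B\otimes\land W\otimes\land W\to\mathcal B\otimes\land W\otimes\land W\otimes\land W$, each the identity on $\mathcal B$, by: $\alpha(w)=w,\ \alpha(w')=w'$; $\beta(w)=w+w',\ \beta(w')=w''$; $\gamma(w)=w,\ \gamma(w')=w'+w''$; $\delta(w)=w',\ \delta(w')=w''$. For $I=(i_1,\dots,i_r)$ write $w_I=w_{i_1}\cdots w_{i_r}$, $w'_I=w'_{i_1}\cdots w'_{i_r}$, and $S_I=(w_{i_1}+w'_{i_1})\cdots(w_{i_r}+w'_{i_r})$. *)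

theory Defs
  imports Main "HOL-Library.Product_Lexorder"
begin

(* Exterior algebra on a totally ordered set of odd generators 'g, with
   integer coefficients. An element is a function from monomials (finite
   sets of generators, read as the product of the generators in increasing
   order) to coefficients. *)

type_synonym 'g ext = "'g set \<Rightarrow> int"

definition ext_supp :: "('g set \<Rightarrow> 'a::zero) \<Rightarrow> 'g set set" where
  "ext_supp x = {A. x A \<noteq> 0}"

(* w_A * w_B = ext_sign A B * w_(A Un B)  (generators anticommute, square zero) *)
definition ext_sign :: "'g::linorder set \<Rightarrow> 'g set \<Rightarrow> int" where
  "ext_sign A B = (if A \<inter> B = {} then (-1) ^ card {(a,b). a \<in> A \<and> b \<in> B \<and> b < a} else 0)"

definition ext_mult :: "'g::linorder ext \<Rightarrow> 'g ext \<Rightarrow> 'g ext" where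
  "ext_mult x y = (\<lambda>N. \<Sum>p \<in> ext_supp x \<times> ext_supp y.
      if fst p \<union> snd p = N then x (fst p) * y (snd p) * ext_sign (fst p) (snd p) else 0)"

definition ext_add :: "'g ext \<Rightarrow> 'g ext \<Rightarrow> 'g ext" where
  "ext_add x y = (\<lambda>N. x N + y N)"

definition ext_one :: "'g ext" where
  "ext_one = (\<lambda>N. if N = {} then 1 else 0)"

definition ext_gen :: "'g \<Rightarrow> 'g ext" where
  "ext_gen g = (\<lambda>N. if N = {g} then 1 else 0)"

definition ext_prod_list :: "'g::linorder ext list \<Rightarrow> 'g ext" where
  "ext_prod_list xs = foldr ext_mult xs ext_one"

(* image of the monomial M under the algebra map sending each generator g to sigma g *)
definition ext_subst :: "('g::linorder \<Rightarrow> 'h::linorder ext) \<Rightarrow> 'g set \<Rightarrow> 'h ext" where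
  "ext_subst \<sigma> M = ext_prod_list (map \<sigma> (sorted_list_of_set M))"

(* Elements of B (x) Lambda(generators): coefficient (in B) of each monomial.
   An algebra map which is the identity on B is left B-linear, hence determined
   by its values on monomials. *)
definition ext_map :: "('g::linorder \<Rightarrow> 'h::linorder ext) \<Rightarrow> ('g set \<Rightarrow> 'b::ring_1) \<Rightarrow> ('h set \<Rightarrow> 'b)" where
  "ext_map \<sigma> \<chi> = (\<lambda>N. \<Sum>M \<in> ext_supp \<chi>. \<chi> M * of_int (ext_subst \<sigma> M N))"

(* Generators of B (x) LW (x) LW (x) LW: (0,i) = w_i, (1,i) = w'_i, (2,i) = w''_i.
   Lexicographic order: a monomial M is w_J w'_K w''_L with J, K, L increasing. *)

definition sig_alpha :: "nat \<times> 'i \<Rightarrow> (nat \<times> 'i) ext" where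
  "sig_alpha g = (if fst g = 0 then ext_gen (0, snd g) else ext_gen (1, snd g))"

definition sig_beta :: "nat \<times> 'i \<Rightarrow> (nat \<times> 'i) ext" where
  "sig_beta g = (if fst g = 0 then ext_add (ext_gen (0, snd g)) (ext_gen (1, snd g))
                 else ext_gen (2, snd g))"

definition sig_gamma :: "nat \<times> 'i \<Rightarrow> (nat \<times> 'i) ext" where
  "sig_gamma g = (if fst g = 0 then ext_gen (0, snd g)
                  else ext_add (ext_gen (1, snd g)) (ext_gen (2, snd g)))"

definition sig_delta :: "nat \<times> 'i \<Rightarrow> (nat \<times> 'i) ext" where
  "sig_delta g = (if fst g = 0 then ext_gen (1, snd g) else ext_gen (2, snd g))"

definition alpha_map :: "((nat \<times> 'i::linorder) set \<Rightarrow> 'b::ring_1) \<Rightarrow> ((nat \<times> 'i) set \<Rightarrow> 'b)" where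
  "alpha_map = ext_map sig_alpha"
definition beta_map :: "((nat \<times> 'i::linorder) set \<Rightarrow> 'b::ring_1) \<Rightarrow> ((nat \<times> 'i) set \<Rightarrow> 'b)" where
  "beta_map = ext_map sig_beta"
definition gamma_map :: "((nat \<times> 'i::linorder) set \<Rightarrow> 'b::ring_1) \<Rightarrow> ((nat \<times> 'i) set \<Rightarrow> 'b)" where
  "gamma_map = ext_map sig_gamma"
definition delta_map :: "((nat \<times> 'i::linorder) set \<Rightarrow> 'b::ring_1) \<Rightarrow> ((nat \<times> 'i) set \<Rightarrow> 'b)" where
  "delta_map = ext_map sig_delta"

(* w_I, w'_I, S_I for a finite set I, read as strictly increasing sequence *)
definition w_mon :: "'i::linorder set \<Rightarrow> (nat \<times> 'i) ext" where
  "w_mon I = (\<lambda>N. if N = (\<lambda>i. (0::nat, i)) ` I then 1 else 0)"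
definition w'_mon :: "'i::linorder set \<Rightarrow> (nat \<times> 'i) ext" where
  "w'_mon I = (\<lambda>N. if N = (\<lambda>i. (1::nat, i)) ` I then 1 else 0)"
definition S_mon :: "'i::linorder set \<Rightarrow> (nat \<times> 'i) ext" where
  "S_mon I = ext_prod_list (map (\<lambda>i. ext_add (ext_gen (0, i)) (ext_gen (1, i)))
                                (sorted_list_of_set I))"

definition SI_minus :: "'i::linorder set \<Rightarrow> (nat \<times> 'i) ext" where
  "SI_minus I = (\<lambda>N. S_mon I N - w_mon I N - w'_mon I N)"

end

theory Submission
  imports Defs
begin


lemma finite_supp_mult: "finite (ext_supp (ext_mult x y))"
proof (cases "finite (ext_supp x \<times> ext_supp y)")
  case True
  have "ext_supp (ext_mult x y) \<subseteq> (\<lambda>p. fst p \<union> snd p) ` (ext_supp x \<times> ext_supp y)"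
  proof
    fix N assume "N \<in> ext_supp (ext_mult x y)"
    hence "(\<Sum>p \<in> ext_supp x \<times> ext_supp y. if fst p \<union> snd p = N then x (fst p) * y (snd p) * ext_sign (fst p) (snd p) else 0) \<noteq> 0"
      by (simp add: ext_supp_def ext_mult_def)
    hence "\<exists>p\<in>ext_supp x \<times> ext_supp y. fst p \<union> snd p = N"
      by (rule contrapos_np) (simp add: sum.neutral)
    then obtain p where p: "p \<in> ext_supp x \<times> ext_supp y" "fst p \<union> snd p = N" by blast
    show "N \<in> (\<lambda>p. fst p \<union> snd p) ` (ext_supp x \<times> ext_supp y)" using p by (intro image_eqI[of _ _ p]) auto
  qed
  thus ?thesis using True finite_subset finite_imageI by metis
next
  case False
  hence "ext_mult x y = (\<lambda>N. 0)" unfolding ext_mult_def by (intro ext sum.infinite)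
  thus ?thesis by (simp add: ext_supp_def)
qed

lemma mult_expand:
  assumes "finite SA" "ext_supp x \<subseteq> SA" "finite (ext_supp y)"
  shows "ext_mult x y N = (\<Sum>p \<in> SA \<times> ext_supp y.
      if fst p \<union> snd p = N then x (fst p) * y (snd p) * ext_sign (fst p) (snd p) else 0)"
  unfolding ext_mult_def
  by (rule sum.mono_neutral_left) (use assms in \<open>auto simp: ext_supp_def\<close>)

lemma supp_add: "ext_supp (ext_add a b) \<subseteq> ext_supp a \<union> ext_supp b"
  by (auto simp: ext_supp_def ext_add_def)

lemma supp_gen: "ext_supp (ext_gen g) = {{g}}"
  by (auto simp: ext_supp_def ext_gen_def)

lemma mult_add:
  assumes "finite (ext_supp a)" "finite (ext_supp b)" "finite (ext_supp y)"
  shows "ext_mult (ext_add a b) y N = ext_mult a y N + ext_mult b y N"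
proof -
  let ?S = "ext_supp a \<union> ext_supp b"
  have "ext_mult (ext_add a b) y N = (\<Sum>p \<in> ?S \<times> ext_supp y.
      if fst p \<union> snd p = N then ext_add a b (fst p) * y (snd p) * ext_sign (fst p) (snd p) else 0)"
    using assms supp_add by (intro mult_expand) auto
  also have "\<dots> = (\<Sum>p \<in> ?S \<times> ext_supp y.
      (if fst p \<union> snd p = N then a (fst p) * y (snd p) * ext_sign (fst p) (snd p) else 0)
     + (if fst p \<union> snd p = N then b (fst p) * y (snd p) * ext_sign (fst p) (snd p) else 0))"
    by (intro sum.cong) (auto simp: ext_add_def algebra_simps)
  also have "\<dots> = ext_mult a y N + ext_mult b y N"
    using assms by (simp add: sum.distrib mult_expand[of ?S])
  finally show ?thesis .
qed




lemma mult_gen: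
  assumes "finite (ext_supp y)"
  shows "ext_mult (ext_gen g) y N = (if g \<in> N then y (N - {g}) * ext_sign {g} (N - {g}) else 0)"
proof -
  have "ext_mult (ext_gen g) y N = (\<Sum>B\<in>ext_supp y. if insert g B = N then y B * ext_sign {g} B else 0)"
  proof -
    have eq: "{{g}} \<times> ext_supp y = Pair {g} ` ext_supp y" by auto
    have inj: "inj_on (Pair {g}) (ext_supp y)" by (simp add: inj_on_def)
    have "ext_mult (ext_gen g) y N = (\<Sum>p\<in>Pair {g} ` ext_supp y. if fst p \<union> snd p = N then ext_gen g (fst p) * y (snd p) * ext_sign (fst p) (snd p) else 0)"
      unfolding ext_mult_def supp_gen eq ..
    also have "\<dots> = (\<Sum>B\<in>ext_supp y. if {g} \<union> B = N then ext_gen g {g} * y B * ext_sign {g} B else 0)"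
      by (subst sum.reindex[OF inj]) (simp add: o_def cong: if_cong)
    also have "\<dots> = (\<Sum>B\<in>ext_supp y. if insert g B = N then y B * ext_sign {g} B else 0)"
      by (simp add: ext_gen_def cong: if_cong)
    finally show ?thesis .
  qed
  also have "\<dots> = (\<Sum>B\<in>ext_supp y. if B = N - {g} then (if g \<in> N then y B * ext_sign {g} B else 0) else 0)"
    by (intro sum.cong) (auto simp: ext_sign_def)
  also have "\<dots> = (if g \<in> N then y (N - {g}) * ext_sign {g} (N - {g}) else 0)"
    using assms by (simp add: sum.delta ext_supp_def)
  finally show ?thesis .
qed

lemma foldr_finite: "finite (ext_supp Y) \<Longrightarrow> finite (ext_supp (foldr ext_mult xs Y))"
  by (cases xs) (auto simp: finite_supp_mult)

lemma sign_zero: "A \<inter> B \<noteq> {} \<Longrightarrow> ext_sign A B = 0"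
  by (simp add: ext_sign_def)

lemma sign_sq: "A \<inter> B = {} \<Longrightarrow> ext_sign A B * ext_sign A B = 1"
  by (simp add: ext_sign_def power_mult_distrib[symmetric])

lemma sign_lt: "(\<forall>a\<in>A. \<forall>b\<in>B. a < b) \<Longrightarrow> ext_sign A B = 1"
proof -
  assume h: "\<forall>a\<in>A. \<forall>b\<in>B. a < b"
  hence "A \<inter> B = {}" by auto
  moreover have "{(a,b). a \<in> A \<and> b \<in> B \<and> b < a} = {}" using h by fastforce
  ultimately show ?thesis unfolding ext_sign_def by (simp only: if_True card.empty power_0) simp
qed

lemma sign_single: "g \<notin> B \<Longrightarrow> ext_sign {g} B = (-1) ^ card {x\<in>B. x < g}"
proof -
  assume "g \<notin> B"
  have "{(a,b). a \<in> {g} \<and> b \<in> B \<and> b < a} = (\<lambda>x. (g,x)) ` {x\<in>B. x < g}" by auto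
  moreover have "card ((\<lambda>x. (g,x)) ` {x\<in>B. x < g}) = card {x\<in>B. x < g}"
    by (rule card_image) (auto simp: inj_on_def)
  ultimately show ?thesis using \<open>g \<notin> B\<close> by (simp add: ext_sign_def)
qed

lemma sign_insert_left:
  "j \<notin> A \<Longrightarrow> (\<forall>b\<in>B. j < b) \<Longrightarrow> ext_sign (insert j A) B = ext_sign A B"
proof -
  assume h: "j \<notin> A" "\<forall>b\<in>B. j < b"
  have "{(a,b). a \<in> insert j A \<and> b \<in> B \<and> b < a} = {(a,b). a \<in> A \<and> b \<in> B \<and> b < a}"
    using h by fastforce
  moreover have "(insert j A \<inter> B = {}) = (A \<inter> B = {})" using h by auto
  ultimately show ?thesis by (simp add: ext_sign_def)
qed

lemma sign_insert_right:
  assumes "finite A" "finite B" "j \<notin> B" "\<forall>a\<in>A. j < a"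
  shows "ext_sign A (insert j B) = (-1) ^ card A * ext_sign A B"
proof -
  have e: "{(a,b). a \<in> A \<and> b \<in> insert j B \<and> b < a} = {(a,b). a \<in> A \<and> b \<in> B \<and> b < a} \<union> A \<times> {j}"
    using assms by auto
  have d: "{(a,b). a \<in> A \<and> b \<in> B \<and> b < a} \<inter> A \<times> {j} = {}" using assms by auto
  have f: "finite {(a,b). a \<in> A \<and> b \<in> B \<and> b < a}"
    by (rule finite_subset[of _ "A \<times> B"]) (use assms in auto)
  have c: "card {(a,b). a \<in> A \<and> b \<in> insert j B \<and> b < a} = card {(a,b). a \<in> A \<and> b \<in> B \<and> b < a} + card A"
    unfolding e using d f assms by (simp add: card_Un_disjoint card_cartesian_product)
  have dis: "(A \<inter> insert j B = {}) = (A \<inter> B = {})" using assms by auto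
  have "ext_sign A (insert j B) = (if A \<inter> B = {} then (-1) ^ (card {(a,b). a \<in> A \<and> b \<in> B \<and> b < a} + card A) else 0)"
    unfolding ext_sign_def by (simp only: c dis)
  thus ?thesis by (simp add: ext_sign_def power_add mult.commute)
qed

lemma pairs_fin: "finite A \<Longrightarrow> finite B \<Longrightarrow> finite {(a,b). a \<in> A \<and> b \<in> B \<and> b < a}"
  by (rule finite_subset[of _ "A \<times> B"]) auto

lemma sign_union_left:
  assumes "finite A" "finite B" "finite C" "A \<inter> B = {}"
  shows "ext_sign (A \<union> B) C = ext_sign A C * ext_sign B C"
proof (cases "(A \<union> B) \<inter> C = {}")
  case True
  have e: "{(a,c). a \<in> A \<union> B \<and> c \<in> C \<and> c < a} = {(a,c). a \<in> A \<and> c \<in> C \<and> c < a} \<union> {(a,c). a \<in> B \<and> c \<in> C \<and> c < a}"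
    by auto
  have d: "{(a,c). a \<in> A \<and> c \<in> C \<and> c < a} \<inter> {(a,c). a \<in> B \<and> c \<in> C \<and> c < a} = {}" using assms by auto
  have "card ({(a,c). a \<in> A \<and> c \<in> C \<and> c < a} \<union> {(a,c). a \<in> B \<and> c \<in> C \<and> c < a}) = card {(a,c). a \<in> A \<and> c \<in> C \<and> c < a} + card {(a,c). a \<in> B \<and> c \<in> C \<and> c < a}"
    by (rule card_Un_disjoint) (use pairs_fin assms d in auto)
  moreover have "A \<inter> B = {}" "A \<inter> C = {}" "B \<inter> C = {}" using True assms by auto
  ultimately show ?thesis using True unfolding ext_sign_def e by (simp add: power_add)
next
  case False thus ?thesis by (auto simp: ext_sign_def)
qed

lemma sign_union_right:
  assumes "finite A" "finite B" "finite C" "B \<inter> C = {}"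
  shows "ext_sign A (B \<union> C) = ext_sign A B * ext_sign A C"
proof (cases "A \<inter> (B \<union> C) = {}")
  case True
  have e: "{(a,c). a \<in> A \<and> c \<in> B \<union> C \<and> c < a} = {(a,c). a \<in> A \<and> c \<in> B \<and> c < a} \<union> {(a,c). a \<in> A \<and> c \<in> C \<and> c < a}"
    by auto
  have d: "{(a,c). a \<in> A \<and> c \<in> B \<and> c < a} \<inter> {(a,c). a \<in> A \<and> c \<in> C \<and> c < a} = {}" using assms by auto
  have "card ({(a,c). a \<in> A \<and> c \<in> B \<and> c < a} \<union> {(a,c). a \<in> A \<and> c \<in> C \<and> c < a}) = card {(a,c). a \<in> A \<and> c \<in> B \<and> c < a} + card {(a,c). a \<in> A \<and> c \<in> C \<and> c < a}"
    by (rule card_Un_disjoint) (use pairs_fin assms d in auto)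
  moreover have "A \<inter> B = {}" "A \<inter> C = {}" "B \<inter> C = {}" using True assms by auto
  ultimately show ?thesis using True unfolding ext_sign_def e by (simp add: power_add)
next
  case False thus ?thesis by (auto simp: ext_sign_def)
qed



lemma prod_gens:
  assumes "sorted_wrt (<) gs" "finite (ext_supp Y)" "\<forall>g\<in>set gs. \<forall>S\<in>ext_supp Y. \<forall>x\<in>S. g < x"
  shows "foldr ext_mult (map ext_gen gs) Y N = (if set gs \<subseteq> N then Y (N - set gs) else 0)"
  using assms
proof (induction gs arbitrary: N)
  case Nil thus ?case by simp
next
  case (Cons g gs)
  have sg: "sorted_wrt (<) gs" and gl: "\<forall>x\<in>set gs. g < x" using Cons.prems(1) by auto
  have IH: "\<And>N. foldr ext_mult (map ext_gen gs) Y N = (if set gs \<subseteq> N then Y (N - set gs) else 0)"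
    using Cons.IH sg Cons.prems(2,3) by auto
  have fin: "finite (ext_supp (foldr ext_mult (map ext_gen gs) Y))" using foldr_finite Cons.prems(2) by blast
  have "foldr ext_mult (map ext_gen (g#gs)) Y N = ext_mult (ext_gen g) (foldr ext_mult (map ext_gen gs) Y) N" by simp
  also have "\<dots> = (if g \<in> N then (if set gs \<subseteq> N - {g} then Y (N - {g} - set gs) else 0) * ext_sign {g} (N - {g}) else 0)"
    by (simp only: mult_gen[OF fin] IH)
  also have "\<dots> = (if set (g#gs) \<subseteq> N then Y (N - set (g#gs)) else 0)"
  proof (cases "g \<in> N \<and> set gs \<subseteq> N - {g}")
    case True
    have e: "N - {g} - set gs = N - set (g#gs)" by auto
    show ?thesis
    proof (cases "Y (N - set (g#gs)) = 0")
      case True thus ?thesis using e by auto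
    next
      case False
      hence "N - set (g#gs) \<in> ext_supp Y" by (simp add: ext_supp_def)
      hence "\<forall>x\<in>N - set (g#gs). g < x" using Cons.prems(3) by auto
      hence "\<forall>x\<in>N - {g}. g < x" using gl by auto
      hence "ext_sign {g} (N - {g}) = 1" by (intro sign_lt) auto
      thus ?thesis using True e by auto
    qed
  next
    case False
    hence "\<not> set (g#gs) \<subseteq> N" using gl by auto
    thus ?thesis using False by auto
  qed
  finally show ?case .
qed

lemma supp_mono: "ext_supp (\<lambda>N. if N = T then 1 else 0) \<subseteq> {T}"
  by (auto simp: ext_supp_def)

lemma prod_lin:
  fixes a b :: nat and T :: "(nat \<times> 'i::linorder) set"
  assumes ab: "a < b" and sj: "sorted_wrt (<) js" and T: "\<forall>x\<in>T. b < fst x"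
  shows "foldr ext_mult (map (\<lambda>j. ext_add (ext_gen (a,j)) (ext_gen (b,j))) js) (\<lambda>N. if N = T then 1 else 0) N =
   (if T \<subseteq> N \<and> (\<forall>x\<in>N - T. fst x = a \<or> fst x = b) \<and> {i. (a,i)\<in>N} \<union> {i. (b,i)\<in>N} = set js
    then ext_sign {i. (a,i)\<in>N} {i. (b,i)\<in>N} else 0)"
  using sj
proof (induction js arbitrary: N)
  case Nil
  have Ta: "{i. (a,i)\<in>T} = {}" "{i. (b,i)\<in>T} = {}" using T ab by force+
  show ?case
  proof (cases "N = T")
    case True thus ?thesis using Ta by (simp add: ext_sign_def)
  next
    case False
    have "\<not> (T \<subseteq> N \<and> (\<forall>x\<in>N - T. fst x = a \<or> fst x = b) \<and> {i. (a,i)\<in>N} \<union> {i. (b,i)\<in>N} = {})"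
    proof
      assume h: "T \<subseteq> N \<and> (\<forall>x\<in>N - T. fst x = a \<or> fst x = b) \<and> {i. (a,i)\<in>N} \<union> {i. (b,i)\<in>N} = {}"
      have "N \<subseteq> T"
      proof
        fix x assume "x \<in> N"
        show "x \<in> T"
        proof (rule ccontr)
          assume "x \<notin> T"
          hence "fst x = a \<or> fst x = b" using h \<open>x \<in> N\<close> by auto
          hence "snd x \<in> {i. (a,i)\<in>N} \<union> {i. (b,i)\<in>N}" using \<open>x \<in> N\<close> by (cases x) auto
          thus False using h by blast
        qed
      qed
      thus False using h False by blast
    qed
    hence "(if T \<subseteq> N \<and> (\<forall>x\<in>N - T. fst x = a \<or> fst x = b) \<and> {i. (a,i)\<in>N} \<union> {i. (b,i)\<in>N} = set []
    then ext_sign {i. (a,i)\<in>N} {i. (b,i)\<in>N} else 0) = 0" by (simp only: list.set(1) if_False)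
    thus ?thesis using False by simp
  qed
next
  case (Cons j js)
  let ?L = "\<lambda>j. ext_add (ext_gen (a,j)) (ext_gen (b,j))"
  let ?R = "foldr ext_mult (map ?L js) (\<lambda>N. if N = T then 1 else 0)"
  let ?C = "\<lambda>N S. T \<subseteq> N \<and> (\<forall>x\<in>N - T. fst x = a \<or> fst x = b) \<and> {i. (a,i)\<in>N} \<union> {i. (b,i)\<in>N} = S"
  have sj': "sorted_wrt (<) js" and jl: "\<forall>x\<in>set js. j < x" using Cons.prems by auto
  have jn: "j \<notin> set js" using jl by auto
  have IH: "\<And>N. ?R N = (if ?C N (set js) then ext_sign {i. (a,i)\<in>N} {i. (b,i)\<in>N} else 0)"
    using Cons.IH sj' by blast
  have fin: "finite (ext_supp ?R)"
    by (rule foldr_finite) (rule finite_subset[OF supp_mono], simp)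
  have aT: "(a,j) \<notin> T" "(b,j) \<notin> T" using T ab by force+
  have "foldr ext_mult (map ?L (j#js)) (\<lambda>N. if N = T then 1 else 0) N = ext_mult (?L j) ?R N" by simp
  also have "\<dots> = ext_mult (ext_gen (a,j)) ?R N + ext_mult (ext_gen (b,j)) ?R N"
    by (rule mult_add) (simp_all add: supp_gen fin)
  also have "\<dots> = (if (a,j) \<in> N then ?R (N - {(a,j)}) * ext_sign {(a,j)} (N - {(a,j)}) else 0)
     + (if (b,j) \<in> N then ?R (N - {(b,j)}) * ext_sign {(b,j)} (N - {(b,j)}) else 0)"
    by (simp only: mult_gen[OF fin])
  also have "\<dots> = (if ?C N (set (j#js)) then ext_sign {i. (a,i)\<in>N} {i. (b,i)\<in>N} else 0)"
  proof -
    consider (A) "(a,j) \<in> N" "(b,j) \<notin> N" | (B) "(a,j) \<notin> N" "(b,j) \<in> N"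
      | (C) "(a,j) \<in> N" "(b,j) \<in> N" | (D) "(a,j) \<notin> N" "(b,j) \<notin> N" by blast
    thus ?thesis
    proof cases
      case A
      let ?N1 = "N - {(a,j)}"
      have pa: "{i. (a,i)\<in>N} = insert j {i. (a,i)\<in>?N1}" and pb: "{i. (b,i)\<in>?N1} = {i. (b,i)\<in>N}"
        and ja: "j \<notin> {i. (a,i)\<in>?N1}" and jb: "j \<notin> {i. (b,i)\<in>N}"
        using A ab by auto
      have ceq: "?C ?N1 (set js) = ?C N (set (j#js))"
      proof -
        have 1: "(T \<subseteq> ?N1) = (T \<subseteq> N)" using aT by auto
        have 2: "(\<forall>x\<in>?N1 - T. fst x = a \<or> fst x = b) = (\<forall>x\<in>N - T. fst x = a \<or> fst x = b)"
          using A by auto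
        have 3: "({i. (a,i)\<in>?N1} \<union> {i. (b,i)\<in>?N1} = set js) = ({i. (a,i)\<in>N} \<union> {i. (b,i)\<in>N} = set (j#js))"
          unfolding pa pb using ja jb jn by auto
        show ?thesis using 1 2 3 by simp
      qed
      show ?thesis
      proof (cases "?C N (set (j#js))")
        case True
        hence c1: "?C ?N1 (set js)" using ceq by simp
        have "\<forall>x\<in>?N1. (a,j) < x"
        proof
          fix x assume x: "x \<in> ?N1"
          show "(a,j) < x"
          proof (cases "x \<in> T")
            case True thus ?thesis using T ab by (cases x) auto
          next
            case False
            hence "fst x = a \<or> fst x = b" using c1 x by auto
            moreover have "snd x \<in> set js"
              using c1 x calculation by (cases x) auto
            ultimately show ?thesis using jl ab by (cases x) auto
          qed
        qed
        hence s1: "ext_sign {(a,j)} ?N1 = 1" by (intro sign_lt) auto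
        have "\<forall>y\<in>{i. (b,i)\<in>?N1}. j < y" using c1 jl by auto
        hence s2: "ext_sign {i. (a,i)\<in>N} {i. (b,i)\<in>N} = ext_sign {i. (a,i)\<in>?N1} {i. (b,i)\<in>?N1}"
          unfolding pa pb[symmetric] using ja by (intro sign_insert_left)
        have r: "?R ?N1 = ext_sign {i. (a,i)\<in>?N1} {i. (b,i)\<in>?N1}"
          by (rule trans[OF IH]) (rule if_P[OF c1])
        show ?thesis by (simp only: if_P[OF A(1)] if_not_P[OF A(2)] if_P[OF True] r s1 s2 mult_1_right add_0_right)
      next
        case False
        hence nc: "\<not> ?C ?N1 (set js)" using ceq by simp
        have r: "?R ?N1 = 0" by (rule trans[OF IH]) (rule if_not_P[OF nc])
        show ?thesis by (simp only: if_P[OF A(1)] if_not_P[OF A(2)] if_not_P[OF False] r mult_zero_left add_0_right)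
      qed
    next
      case B
      let ?N2 = "N - {(b,j)}"
      have pb: "{i. (b,i)\<in>N} = insert j {i. (b,i)\<in>?N2}" and pa: "{i. (a,i)\<in>?N2} = {i. (a,i)\<in>N}"
        and jb: "j \<notin> {i. (b,i)\<in>?N2}" and ja: "j \<notin> {i. (a,i)\<in>N}"
        using B ab by auto
      have ceq: "?C ?N2 (set js) = ?C N (set (j#js))"
      proof -
        have 1: "(T \<subseteq> ?N2) = (T \<subseteq> N)" using aT by auto
        have 2: "(\<forall>x\<in>?N2 - T. fst x = a \<or> fst x = b) = (\<forall>x\<in>N - T. fst x = a \<or> fst x = b)"
          using B by auto
        have 3: "({i. (a,i)\<in>?N2} \<union> {i. (b,i)\<in>?N2} = set js) = ({i. (a,i)\<in>N} \<union> {i. (b,i)\<in>N} = set (j#js))"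
          unfolding pa pb using ja jb jn by auto
        show ?thesis using 1 2 3 by simp
      qed
      show ?thesis
      proof (cases "?C N (set (j#js))")
        case True
        hence c1: "?C ?N2 (set js)" using ceq by simp
        have "{x\<in>?N2. x < (b,j)} = Pair a ` {i. (a,i)\<in>?N2}"
        proof
          show "{x\<in>?N2. x < (b,j)} \<subseteq> Pair a ` {i. (a,i)\<in>?N2}"
          proof
            fix x assume x: "x \<in> {x\<in>?N2. x < (b,j)}"
            have "x \<notin> T" using x T by (cases x) auto
            hence "fst x = a \<or> fst x = b" using c1 x by auto
            moreover have "snd x \<in> set js"
              using c1 x calculation \<open>x \<notin> T\<close> by (cases x) auto
            ultimately have "fst x = a" using x jl by (cases x) auto
            thus "x \<in> Pair a ` {i. (a,i)\<in>?N2}" using x by (cases x) auto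
          qed
        next
          show "Pair a ` {i. (a,i)\<in>?N2} \<subseteq> {x\<in>?N2. x < (b,j)}" using ab by auto
        qed
        hence "card {x\<in>?N2. x < (b,j)} = card {i. (a,i)\<in>?N2}"
          by (simp add: card_image inj_on_def)
        hence s1: "ext_sign {(b,j)} ?N2 = (-1) ^ card {i. (a,i)\<in>N}"
          using sign_single[of "(b,j)" ?N2] pa by simp
        have fa: "finite {i. (a,i)\<in>N}" "finite {i. (b,i)\<in>?N2}"
          using c1 pa by (metis finite_Un finite_set)+
        have "\<forall>y\<in>{i. (a,i)\<in>N}. j < y" using c1 jl pa by auto
        hence s2: "ext_sign {i. (a,i)\<in>N} {i. (b,i)\<in>N} = (-1) ^ card {i. (a,i)\<in>N} * ext_sign {i. (a,i)\<in>?N2} {i. (b,i)\<in>?N2}"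
          unfolding pb pa using jb fa by (intro sign_insert_right) auto
        have r: "?R ?N2 = ext_sign {i. (a,i)\<in>?N2} {i. (b,i)\<in>?N2}"
          by (rule trans[OF IH]) (rule if_P[OF c1])
        show ?thesis by (simp only: if_P[OF B(2)] if_not_P[OF B(1)] if_P[OF True] r s1 s2 add_0_left mult.commute)
      next
        case False
        hence nc: "\<not> ?C ?N2 (set js)" using ceq by simp
        have r: "?R ?N2 = 0" by (rule trans[OF IH]) (rule if_not_P[OF nc])
        show ?thesis by (simp only: if_P[OF B(2)] if_not_P[OF B(1)] if_not_P[OF False] r mult_zero_left add_0_left)
      qed
    next
      case C
      have n1: "\<not> ?C (N - {(a,j)}) (set js)" using C jn ab by auto
      have n2: "\<not> ?C (N - {(b,j)}) (set js)" using C jn ab by auto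
      have "ext_sign {i. (a,i)\<in>N} {i. (b,i)\<in>N} = 0" using C by (intro sign_zero) auto
      moreover have "?R (N - {(a,j)}) = 0" by (rule trans[OF IH]) (rule if_not_P[OF n1])
      moreover have "?R (N - {(b,j)}) = 0" by (rule trans[OF IH]) (rule if_not_P[OF n2])
      ultimately show ?thesis by (simp only: if_P[OF C(1)] if_P[OF C(2)] mult_zero_left add_0_left if_cancel)
    next
      case D
      have "\<not> ?C N (set (j#js))" using D by auto
      thus ?thesis by (simp only: if_not_P[OF D(1)] if_not_P[OF D(2)] add_0_left if_cancel if_False)
    qed
  qed
  finally show ?case .
qed



lemma ss: "sorted_wrt (<) (sorted_list_of_set (A::'a::linorder set))"
  using sorted_list_of_set.strict_sorted_key_list_of_set[of A] by simp

lemma sorted_pair: "sorted_wrt (<) (map (Pair (s::nat)) (sorted_list_of_set (A::'i::linorder set)))"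
  using ss[of A] by (simp add: sorted_wrt_map)

lemma sorted_two: "s < t \<Longrightarrow> sorted_wrt (<) (map (Pair (s::nat)) (sorted_list_of_set (A::'i::linorder set)) @ map (Pair t) (sorted_list_of_set B))"
  using sorted_pair[of s A] sorted_pair[of t B] by (simp add: sorted_wrt_append)

lemma sorted01:
  assumes "finite J" "finite K"
  shows "sorted_list_of_set (Pair (0::nat) ` J \<union> Pair 1 ` (K::'i::linorder set)) = map (Pair 0) (sorted_list_of_set J) @ map (Pair 1) (sorted_list_of_set K)"
proof (rule strict_sorted_equal)
  show "sorted_wrt (<) (sorted_list_of_set (Pair (0::nat) ` J \<union> Pair 1 ` K))" by (rule ss)
  show "sorted_wrt (<) (map (Pair (0::nat)) (sorted_list_of_set J) @ map (Pair 1) (sorted_list_of_set K))"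
    by (rule sorted_two) simp
  show "set (sorted_list_of_set (Pair 0 ` J \<union> Pair 1 ` K)) = set (map (Pair (0::nat)) (sorted_list_of_set J) @ map (Pair 1) (sorted_list_of_set K))"
    using assms by simp
qed

lemma supp_one: "ext_supp ext_one = {{}}"
  by (auto simp: ext_supp_def ext_one_def)

lemma prod_gens_one:
  assumes "sorted_wrt (<) gs"
  shows "foldr ext_mult (map ext_gen gs) ext_one N = (if N = set gs then 1 else 0)"
proof -
  have "foldr ext_mult (map ext_gen gs) ext_one N = (if set gs \<subseteq> N then ext_one (N - set gs) else 0)"
    using assms by (intro prod_gens) (auto simp: supp_one)
  thus ?thesis by (auto simp: ext_one_def)
qed

lemma subst_beta:
  assumes "finite J" "finite K"
  shows "ext_subst sig_beta (Pair 0 ` J \<union> Pair 1 ` (K::'i::linorder set)) N =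
    (if Pair 2 ` K \<subseteq> N \<and> (\<forall>x\<in>N - Pair 2 ` K. fst x = 0 \<or> fst x = 1) \<and> {i. (0,i)\<in>N} \<union> {i. (1,i)\<in>N} = J
     then ext_sign {i. (0,i)\<in>N} {i. (1,i)\<in>N} else 0)"
proof -
  have m1: "map sig_beta (map (Pair 0) (sorted_list_of_set J)) = map (\<lambda>j. ext_add (ext_gen (0,j)) (ext_gen (1,j))) (sorted_list_of_set J)"
    by (simp add: sig_beta_def)
  have m2: "map sig_beta (map (Pair 1) (sorted_list_of_set K)) = map ext_gen (map (Pair 2) (sorted_list_of_set K))"
    by (simp add: sig_beta_def)
  have inner: "foldr ext_mult (map ext_gen (map (Pair (2::nat)) (sorted_list_of_set K))) ext_one = (\<lambda>N. if N = Pair 2 ` K then 1 else 0)"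
    using prod_gens_one[OF sorted_pair[of 2 K]] assms by (intro ext) simp
  show ?thesis
    unfolding ext_subst_def ext_prod_list_def sorted01[OF assms] map_append foldr_append m1 m2 inner
    by (subst prod_lin) (auto simp: ss assms)
qed

lemma subst_gamma:
  assumes "finite J" "finite K"
  shows "ext_subst sig_gamma (Pair 0 ` J \<union> Pair 1 ` (K::'i::linorder set)) N =
    (if Pair 0 ` J \<subseteq> N \<and> (\<forall>x\<in>N - Pair 0 ` J. fst x = 1 \<or> fst x = 2) \<and> {i. (1,i)\<in>N - Pair 0 ` J} \<union> {i. (2,i)\<in>N - Pair 0 ` J} = K
     then ext_sign {i. (1,i)\<in>N} {i. (2,i)\<in>N} else 0)"
proof -
  have m1: "map sig_gamma (map (Pair 0) (sorted_list_of_set J)) = map ext_gen (map (Pair 0) (sorted_list_of_set J))"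
    by (simp add: sig_gamma_def)
  have m2: "map sig_gamma (map (Pair 1) (sorted_list_of_set K)) = map (\<lambda>j. ext_add (ext_gen (1,j)) (ext_gen (2,j))) (sorted_list_of_set K)"
    by (simp add: sig_gamma_def)
  let ?G = "foldr ext_mult (map (\<lambda>j. ext_add (ext_gen (1,j)) (ext_gen (2::nat,j))) (sorted_list_of_set K)) ext_one"
  have G: "\<And>N. ?G N = (if {} \<subseteq> N \<and> (\<forall>x\<in>N - {}. fst x = 1 \<or> fst x = 2) \<and> {i. (1,i)\<in>N} \<union> {i. (2,i)\<in>N} = set (sorted_list_of_set K)
     then ext_sign {i. (1,i)\<in>N} {i. (2,i)\<in>N} else 0)"
    unfolding ext_one_def by (rule prod_lin) (auto simp: ss)
  have fin: "finite (ext_supp ?G)" by (rule foldr_finite) (simp add: supp_one)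
  have "foldr ext_mult (map ext_gen (map (Pair 0) (sorted_list_of_set J))) ?G N
     = (if set (map (Pair 0) (sorted_list_of_set J)) \<subseteq> N then ?G (N - set (map (Pair 0) (sorted_list_of_set J))) else 0)"
  proof (rule prod_gens[OF sorted_pair fin])
    show "\<forall>g\<in>set (map (Pair 0) (sorted_list_of_set J)). \<forall>S\<in>ext_supp ?G. \<forall>x\<in>S. g < x"
    proof (intro ballI)
      fix g :: "nat \<times> 'i" and S x assume g: "g \<in> set (map (Pair 0) (sorted_list_of_set J))" and S: "S \<in> ext_supp ?G" and x: "x \<in> S"
      have "?G S \<noteq> 0" using S by (simp add: ext_supp_def)
      hence "\<forall>x\<in>S. fst x = 1 \<or> fst x = 2" using G[of S] by (auto split: if_splits)
      thus "g < x" using g x by (cases x) auto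
    qed
  qed
  also have "\<dots> = (if Pair 0 ` J \<subseteq> N \<and> (\<forall>x\<in>N - Pair 0 ` J. fst x = 1 \<or> fst x = 2) \<and> {i. (1,i)\<in>N - Pair 0 ` J} \<union> {i. (2,i)\<in>N - Pair 0 ` J} = K
     then ext_sign {i. (1,i)\<in>N - Pair 0 ` J} {i. (2,i)\<in>N - Pair 0 ` J} else 0)"
  proof -
    have eJ: "set (map (Pair (0::nat)) (sorted_list_of_set J)) = Pair 0 ` J" using assms by simp
    have eK: "set (sorted_list_of_set K) = K" using assms by simp
    show ?thesis by (simp only: G eJ eK Diff_empty empty_subsetI simp_thms) (simp only: if_if_eq_conj)
  qed
  also have "\<dots> = (if Pair 0 ` J \<subseteq> N \<and> (\<forall>x\<in>N - Pair 0 ` J. fst x = 1 \<or> fst x = 2) \<and> {i. (1,i)\<in>N - Pair 0 ` J} \<union> {i. (2,i)\<in>N - Pair 0 ` J} = K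
     then ext_sign {i. (1,i)\<in>N} {i. (2,i)\<in>N} else 0)"
  proof -
    have "{i. (1::nat,i)\<in>N - Pair 0 ` J} = {i. (1,i)\<in>N}" "{i. (2::nat,i)\<in>N - Pair 0 ` J} = {i. (2,i)\<in>N}" by auto
    thus ?thesis by (simp only:)
  qed
  finally show ?thesis
    unfolding ext_subst_def ext_prod_list_def sorted01[OF assms] map_append foldr_append m1 m2 .
qed



lemma eval_beta:
  assumes "finite J" "finite K"
  shows "ext_subst sig_beta (Pair 0 ` J \<union> Pair 1 ` (K::'i::linorder set)) (Pair 0 ` X \<union> Pair 1 ` Y \<union> Pair 2 ` Z)
     = (if J = X \<union> Y \<and> K = Z then ext_sign X Y else 0)"
proof -
  let ?N = "Pair 0 ` X \<union> Pair 1 ` Y \<union> Pair (2::nat) ` Z"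
  have p0: "{i. (0,i)\<in>?N} = X" and p1: "{i. (1,i)\<in>?N} = Y" by auto
  have c1: "(Pair 2 ` K \<subseteq> ?N) = (K \<subseteq> Z)" by auto
  have c2: "(\<forall>x\<in>?N - Pair 2 ` K. fst x = 0 \<or> fst x = 1) = (Z \<subseteq> K)"
  proof
    assume h: "\<forall>x\<in>?N - Pair 2 ` K. fst x = 0 \<or> fst x = 1"
    show "Z \<subseteq> K"
    proof
      fix z assume z: "z \<in> Z"
      show "z \<in> K"
      proof (rule ccontr)
        assume "z \<notin> K"
        hence "(2,z) \<in> ?N - Pair 2 ` K" using z by auto
        from h[rule_format, OF this] show False by simp
      qed
    qed
  next
    assume h: "Z \<subseteq> K"
    show "\<forall>x\<in>?N - Pair 2 ` K. fst x = 0 \<or> fst x = 1"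
    proof
      fix x assume x: "x \<in> ?N - Pair 2 ` K"
      then consider "x \<in> Pair 0 ` X" | "x \<in> Pair 1 ` Y" | "x \<in> Pair 2 ` Z" by blast
      thus "fst x = 0 \<or> fst x = 1"
      proof cases
        case 3 thus ?thesis using x h by blast
      qed auto
    qed
  qed
  have c3: "(K \<subseteq> Z \<and> Z \<subseteq> K \<and> X \<union> Y = J) = (J = X \<union> Y \<and> K = Z)" by auto
  show ?thesis unfolding subst_beta[OF assms] p0 p1 c1 c2 c3 ..
qed

lemma eval_gamma:
  assumes "finite J" "finite K"
  shows "ext_subst sig_gamma (Pair 0 ` J \<union> Pair 1 ` (K::'i::linorder set)) (Pair 0 ` X \<union> Pair 1 ` Y \<union> Pair 2 ` Z)
     = (if J = X \<and> K = Y \<union> Z then ext_sign Y Z else 0)"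
proof -
  let ?N = "Pair 0 ` X \<union> Pair 1 ` Y \<union> Pair (2::nat) ` Z"
  have p1: "{i. (1,i)\<in>?N} = Y" and p2: "{i. (2,i)\<in>?N} = Z" by auto
  have q1: "{i. (1,i)\<in>?N - Pair 0 ` J} = Y" and q2: "{i. (2,i)\<in>?N - Pair 0 ` J} = Z" by auto
  have c1: "(Pair 0 ` J \<subseteq> ?N) = (J \<subseteq> X)" by auto
  have c2: "(\<forall>x\<in>?N - Pair 0 ` J. fst x = 1 \<or> fst x = 2) = (X \<subseteq> J)"
  proof
    assume h: "\<forall>x\<in>?N - Pair 0 ` J. fst x = 1 \<or> fst x = 2"
    show "X \<subseteq> J"
    proof
      fix z assume z: "z \<in> X"
      show "z \<in> J"
      proof (rule ccontr)
        assume "z \<notin> J"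
        hence "(0,z) \<in> ?N - Pair 0 ` J" using z by auto
        from h[rule_format, OF this] show False by simp
      qed
    qed
  next
    assume h: "X \<subseteq> J"
    show "\<forall>x\<in>?N - Pair 0 ` J. fst x = 1 \<or> fst x = 2"
    proof
      fix x assume x: "x \<in> ?N - Pair 0 ` J"
      then consider "x \<in> Pair 0 ` X" | "x \<in> Pair 1 ` Y" | "x \<in> Pair 2 ` Z" by blast
      thus "fst x = 1 \<or> fst x = 2"
      proof cases
        case 1 thus ?thesis using x h by blast
      qed auto
    qed
  qed
  have c3: "(J \<subseteq> X \<and> X \<subseteq> J \<and> Y \<union> Z = K) = (J = X \<and> K = Y \<union> Z)" by auto
  show ?thesis unfolding subst_gamma[OF assms] p1 p2 q1 q2 c1 c2 c3 ..
qed

lemma eval_alpha: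
  assumes "finite J" "finite K" "Z \<noteq> {}"
  shows "ext_subst sig_alpha (Pair 0 ` J \<union> Pair 1 ` (K::'i::linorder set)) (Pair 0 ` X \<union> Pair 1 ` Y \<union> Pair 2 ` Z) = 0"
proof -
  let ?M = "Pair 0 ` J \<union> Pair (1::nat) ` K"
  have m: "map sig_alpha (sorted_list_of_set ?M) = map ext_gen (sorted_list_of_set ?M)"
  proof (rule map_cong[OF refl])
    fix x assume "x \<in> set (sorted_list_of_set ?M)"
    hence "x \<in> ?M" using assms by simp
    thus "sig_alpha x = ext_gen x" by (auto simp: sig_alpha_def)
  qed
  have ne: "Pair 0 ` X \<union> Pair 1 ` Y \<union> Pair 2 ` Z \<noteq> set (sorted_list_of_set ?M)"
  proof
    assume e: "Pair 0 ` X \<union> Pair 1 ` Y \<union> Pair 2 ` Z = set (sorted_list_of_set ?M)"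
    obtain z where z: "z \<in> Z" using assms(3) by blast
    have "(2,z) \<in> set (sorted_list_of_set ?M)" using z e by blast
    hence "(2,z) \<in> ?M" using assms(1,2) by simp
    thus False by auto
  qed
  show ?thesis unfolding ext_subst_def ext_prod_list_def m prod_gens_one[OF ss] using ne by simp
qed

lemma eval_delta:
  assumes "finite J" "finite K" "X \<noteq> {}"
  shows "ext_subst sig_delta (Pair 0 ` J \<union> Pair 1 ` (K::'i::linorder set)) (Pair 0 ` X \<union> Pair 1 ` Y \<union> Pair 2 ` Z) = 0"
proof -
  have m: "map sig_delta (map (Pair 0) (sorted_list_of_set J) @ map (Pair 1) (sorted_list_of_set K))
      = map ext_gen (map (Pair (1::nat)) (sorted_list_of_set J) @ map (Pair 2) (sorted_list_of_set K))"
    by (simp add: sig_delta_def)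
  have ne: "Pair 0 ` X \<union> Pair 1 ` Y \<union> Pair 2 ` Z \<noteq> set (map (Pair (1::nat)) (sorted_list_of_set J) @ map (Pair 2) (sorted_list_of_set K))"
  proof
    assume e: "Pair 0 ` X \<union> Pair 1 ` Y \<union> Pair 2 ` Z = set (map (Pair (1::nat)) (sorted_list_of_set J) @ map (Pair 2) (sorted_list_of_set K))"
    obtain z where z: "z \<in> X" using assms(3) by blast
    have "(0,z) \<in> set (map (Pair (1::nat)) (sorted_list_of_set J) @ map (Pair 2) (sorted_list_of_set K))" using z e by blast
    thus False by auto
  qed
  have p: "\<And>N. foldr ext_mult (map ext_gen (map (Pair (1::nat)) (sorted_list_of_set J) @ map (Pair 2) (sorted_list_of_set K))) ext_one N
     = (if N = set (map (Pair (1::nat)) (sorted_list_of_set J) @ map (Pair 2) (sorted_list_of_set K)) then 1 else 0)"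
    by (rule prod_gens_one) (rule sorted_two, simp)
  show ?thesis unfolding ext_subst_def ext_prod_list_def sorted01[OF assms(1,2)] m p using ne by (simp only: if_False)
qed

lemma S_mon_eval:
  assumes "finite I"
  shows "S_mon I N = (if (\<forall>x\<in>N. fst x = 0 \<or> fst x = 1) \<and> {i. (0,i)\<in>N} \<union> {i. (1,i)\<in>N} = I
      then ext_sign {i. (0,i)\<in>N} {i. (1,i)\<in>N} else 0)"
proof -
  have eI: "set (sorted_list_of_set I) = I" using assms by simp
  show ?thesis unfolding S_mon_def ext_prod_list_def ext_one_def
    by (subst prod_lin) (auto simp: ss eI)
qed



context
  fixes c :: "'i::linorder set \<Rightarrow> 'i set \<Rightarrow> 'b::ring_1" and r :: nat
  assumes r3: "r \<ge> 3"
    and H1: "\<And>X Y Z. finite X \<Longrightarrow> finite Y \<Longrightarrow> finite Z \<Longrightarrow> X \<noteq> {} \<Longrightarrow> Y \<noteq> {} \<Longrightarrow> Z \<noteq> {} \<Longrightarrow>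
          c (X \<union> Y) Z * of_int (ext_sign X Y) = c X (Y \<union> Z) * of_int (ext_sign Y Z)"
    and H2: "\<And>J K. c J K \<noteq> 0 \<Longrightarrow> finite J \<and> finite K \<and> J \<noteq> {} \<and> K \<noteq> {} \<and> card J + card K = r"
begin

lemma cancel_sign:
  assumes "x * of_int s = (0::'b)" "s * s = 1"
  shows "x = 0"
proof -
  have "x = x * of_int (s * s)" using assms(2) by simp
  also have "\<dots> = (x * of_int s) * of_int s" by (simp add: mult.assoc)
  finally show ?thesis using assms(1) by simp
qed

lemma overlap:
  assumes "J \<inter> K \<noteq> {}"
  shows "c J K = 0"
proof (rule ccontr)
  assume nz: "c J K \<noteq> 0"
  hence fJ: "finite J" and fK: "finite K" and nJ: "J \<noteq> {}" and nK: "K \<noteq> {}" and cr: "card J + card K = r"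
    using H2 by blast+
  obtain i where iJ: "i \<in> J" and iK: "i \<in> K" using assms by blast
  show False
  proof (cases "card K \<ge> 2")
    case True
    have ne: "K - {i} \<noteq> {}"
    proof
      assume "K - {i} = {}"
      hence "K = {i}" using iK by blast
      thus False using True by simp
    qed
    have "c (J \<union> {i}) (K - {i}) * of_int (ext_sign J {i}) = c J ({i} \<union> (K - {i})) * of_int (ext_sign {i} (K - {i}))"
      using H1[of J "{i}" "K - {i}"] fJ fK nJ ne by simp
    moreover have "ext_sign J {i} = 0" using iJ by (intro sign_zero) auto
    moreover have "{i} \<union> (K - {i}) = K" using iK by blast
    ultimately have "c J K * of_int (ext_sign {i} (K - {i})) = 0" by simp
    moreover have "ext_sign {i} (K - {i}) * ext_sign {i} (K - {i}) = 1" by (intro sign_sq) auto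
    ultimately have "c J K = 0" by (rule cancel_sign)
    thus False using nz by simp
  next
    case False
    have "K = {i}"
    proof -
      have "card K \<noteq> 0" using nK fK by simp
      hence "card K = 1" using False by linarith
      then obtain a where "K = {a}" by (rule card_1_singletonE)
      thus ?thesis using iK by blast
    qed
    hence cJ: "card J \<ge> 2" using cr r3 by simp
    have ne: "J - {i} \<noteq> {}"
    proof
      assume "J - {i} = {}"
      hence "J = {i}" using iJ by blast
      thus False using cJ by simp
    qed
    have "c ((J - {i}) \<union> {i}) {i} * of_int (ext_sign (J - {i}) {i}) = c (J - {i}) ({i} \<union> {i}) * of_int (ext_sign {i} {i})"
      using H1[of "J - {i}" "{i}" "{i}"] fJ ne by simp
    moreover have "ext_sign {i} {i} = 0" by (intro sign_zero) auto
    moreover have "(J - {i}) \<union> {i} = J" using iJ by blast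
    ultimately have "c J {i} * of_int (ext_sign (J - {i}) {i}) = 0" by simp
    moreover have "ext_sign (J - {i}) {i} * ext_sign (J - {i}) {i} = 1" by (intro sign_sq) auto
    ultimately have "c J {i} = 0" by (rule cancel_sign)
    thus False using nz \<open>K = {i}\<close> by simp
  qed
qed

definition d :: "'i set \<Rightarrow> 'i set \<Rightarrow> 'b" where "d J K = c J K * of_int (ext_sign J K)"

lemma d_move:
  assumes f: "finite X" "finite Y" "finite Z" and n: "X \<noteq> {}" "Y \<noteq> {}" "Z \<noteq> {}"
    and dis: "X \<inter> Y = {}" "X \<inter> Z = {}" "Y \<inter> Z = {}"
  shows "d (X \<union> Y) Z = d X (Y \<union> Z)"
proof -
  define sXY where "sXY = ext_sign X Y"
  define sXZ where "sXZ = ext_sign X Z"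
  define sYZ where "sYZ = ext_sign Y Z"
  have q1: "sXY * sXY = 1" unfolding sXY_def using dis(1) by (rule sign_sq)
  have q2: "sYZ * sYZ = 1" unfolding sYZ_def using dis(3) by (rule sign_sq)
  have e1: "ext_sign (X \<union> Y) Z = sXZ * sYZ" unfolding sXZ_def sYZ_def using f dis(1) by (rule sign_union_left)
  have e2: "ext_sign X (Y \<union> Z) = sXY * sXZ" unfolding sXY_def sXZ_def using f dis(3) by (rule sign_union_right)
  have h: "c (X \<union> Y) Z * of_int sXY = c X (Y \<union> Z) * of_int sYZ"
    unfolding sXY_def sYZ_def using f n by (rule H1)
  have "d (X \<union> Y) Z = c (X \<union> Y) Z * of_int ((sXY * sXY) * (sXZ * sYZ))"
    unfolding d_def e1 q1 by simp
  also have "\<dots> = (c (X \<union> Y) Z * of_int sXY) * of_int (sXY * sXZ * sYZ)"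
    by (simp add: mult.assoc mult.left_commute)
  also have "\<dots> = (c X (Y \<union> Z) * of_int sYZ) * of_int (sXY * sXZ * sYZ)" by (simp only: h)
  also have "\<dots> = c X (Y \<union> Z) * of_int (sYZ * (sXY * sXZ * sYZ))"
    by (simp only: mult.assoc of_int_mult)
  also have "\<dots> = c X (Y \<union> Z) * of_int ((sYZ * sYZ) * (sXY * sXZ))"
    by (rule arg_cong[where f="\<lambda>t. c X (Y \<union> Z) * of_int t"]) (simp add: ac_simps)
  also have "\<dots> = d X (Y \<union> Z)" unfolding d_def e2 q2 by simp
  finally show ?thesis .
qed

lemma D1:
  assumes fI: "finite I" and A: "A \<subseteq> I" "A \<noteq> I" and x: "x \<in> A"
  shows "d A (I - A) = d {x} (I - {x})"
proof (cases "A = {x}")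
  case True thus ?thesis by simp
next
  case False
  have fA: "finite A" using fI A finite_subset by blast
  have "d ({x} \<union> (A - {x})) (I - A) = d {x} ((A - {x}) \<union> (I - A))"
    by (rule d_move) (use fI fA A x False in auto)
  moreover have "{x} \<union> (A - {x}) = A" using x by blast
  moreover have "(A - {x}) \<union> (I - A) = I - {x}" using A x by blast
  ultimately show ?thesis by simp
qed

lemma D2:
  assumes fI: "finite I" and cI: "card I \<ge> 3" and xy: "x \<in> I" "y \<in> I"
  shows "d {x} (I - {x}) = d {y} (I - {y})"
proof (cases "x = y")
  case True thus ?thesis by simp
next
  case False
  have ne: "{x,y} \<noteq> I"
  proof
    assume "{x,y} = I"
    moreover have "card {x,y} = 2" using False by simp
    ultimately have "card I \<le> 2" by simp
    thus False using cI by simp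
  qed
  have "d {x,y} (I - {x,y}) = d {x} (I - {x})" by (rule D1) (use fI xy ne in auto)
  moreover have "d {x,y} (I - {x,y}) = d {y} (I - {y})" by (rule D1) (use fI xy ne in auto)
  ultimately show ?thesis by simp
qed

definition bb :: "'i set \<Rightarrow> 'b" where
  "bb I = (if finite I \<and> card I = r then d {Min I} (I - {Min I}) else 0)"

lemma key:
  assumes "finite J" "finite K" "J \<noteq> {}" "K \<noteq> {}" "J \<inter> K = {}" "card (J \<union> K) = r"
  shows "c J K = bb (J \<union> K) * of_int (ext_sign J K)"
proof -
  let ?I = "J \<union> K"
  have fI: "finite ?I" using assms by simp
  have mI: "Min ?I \<in> ?I" using fI assms(3) by (intro Min_in) auto
  have "d J (?I - J) = d {Min ?I} (?I - {Min ?I})"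
  proof -
    obtain x where x: "x \<in> J" using assms(3) by blast
    have "J \<noteq> ?I" using assms(4,5) by blast
    hence "d J (?I - J) = d {x} (?I - {x})" using fI x by (intro D1) auto
    also have "\<dots> = d {Min ?I} (?I - {Min ?I})" using fI assms(6) r3 x mI by (intro D2) auto
    finally show ?thesis .
  qed
  moreover have "?I - J = K" using assms(5) by blast
  ultimately have "d J K = bb ?I" unfolding bb_def using fI assms(6) by simp
  have sq: "ext_sign J K * ext_sign J K = 1" using assms(5) by (rule sign_sq)
  have "c J K = c J K * of_int (ext_sign J K * ext_sign J K)" using sq by simp
  also have "\<dots> = d J K * of_int (ext_sign J K)" unfolding d_def by (simp add: mult.assoc)
  finally show ?thesis using \<open>d J K = bb ?I\<close> by simp
qed

end



lemma decomp: "fst ` M \<subseteq> {0,1} \<Longrightarrow> M = Pair (0::nat) ` {i. (0,i)\<in>M} \<union> Pair 1 ` {i. (1,i)\<in>M}"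
  by (auto simp: image_iff)
lemma parts: "{i. (0::nat,i) \<in> Pair 0 ` A \<union> Pair 1 ` B} = A" "{i. (1::nat,i) \<in> Pair 0 ` A \<union> Pair 1 ` B} = B"
  by auto

lemma sum_point:
  assumes "finite S" "\<And>M. M \<in> S \<Longrightarrow> f M = (if M = M0 then v else 0)" "M0 \<notin> S \<Longrightarrow> v = (0::'b::comm_monoid_add)"
  shows "sum f S = v"
proof -
  have "sum f S = (\<Sum>M\<in>S. if M = M0 then v else 0)" using assms(2) by (rule sum.cong[OF refl])
  also have "\<dots> = (if M0 \<in> S then v else 0)" using assms(1) by (rule sum.delta)
  also have "\<dots> = v" using assms(3) by auto
  finally show ?thesis .
qed

lemma P0_facts: "N = Pair (0::nat) ` I \<Longrightarrow> (\<forall>x\<in>N. fst x = 0 \<or> fst x = 1) \<and> {i. (0,i)\<in>N} \<union> {i. (1,i)\<in>N} = I" by auto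
lemma P1_facts: "N = Pair (1::nat) ` I \<Longrightarrow> (\<forall>x\<in>N. fst x = 0 \<or> fst x = 1) \<and> {i. (0,i)\<in>N} \<union> {i. (1,i)\<in>N} = I" by auto
lemma ne01: "I \<noteq> {} \<Longrightarrow> Pair (1::nat) ` I \<noteq> Pair 0 ` I" by auto
lemma K_ne: "{i. (1::nat,i)\<in>N} \<noteq> {} \<Longrightarrow> N \<noteq> Pair 0 ` I" by auto
lemma J_ne: "{i. (0::nat,i)\<in>N} \<noteq> {} \<Longrightarrow> N \<noteq> Pair 1 ` I" by auto
lemma Q_fst: "\<forall>x\<in>N. fst x = 0 \<or> fst x = (1::nat) \<Longrightarrow> fst ` N \<subseteq> {0,1}" by auto
lemma fst_Q: "fst ` N \<subseteq> {0,1::nat} \<Longrightarrow> \<forall>x\<in>N. fst x = 0 \<or> fst x = (1::nat)" by auto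
lemma snd_img: "m \<in> I \<Longrightarrow> snd ` (Pair (0::nat) ` {m} \<union> Pair (1::nat) ` (I - {m})) = I"
  by (auto simp: image_Un image_image)
lemma J0: "{i. (0::nat,i)\<in>Pair 1 ` I} = {}" "{i. (1::nat,i)\<in>Pair 0 ` I} = {}" by auto

theorem mainTheorem8:
  fixes \<chi> :: "(nat \<times> 'i::linorder) set \<Rightarrow> 'b::ring_1"
    and r :: nat
  assumes rational: "\<forall>n::nat. n > 0 \<longrightarrow> (\<exists>y::'b. of_nat n * y = 1 \<and> y * of_nat n = 1)"
    and r3: "r \<ge> 3"
    and fin: "finite (ext_supp \<chi>)"
    and bideg: "\<forall>M \<in> ext_supp \<chi>. finite M \<and> fst ` M \<subseteq> {0, 1} \<and> card M = r
                 \<and> 1 \<le> card {g \<in> M. fst g = 0} \<and> card {g \<in> M. fst g = 0} \<le> r - 1"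
    and eq: "(\<lambda>N. alpha_map \<chi> N + beta_map \<chi> N) = (\<lambda>N. gamma_map \<chi> N + delta_map \<chi> N)"
  shows "\<exists>b :: 'i set \<Rightarrow> 'b. finite (ext_supp b)
           \<and> (\<forall>I \<in> ext_supp b. finite I \<and> card I = r)
           \<and> \<chi> = (\<lambda>N. \<Sum>I \<in> ext_supp b. b I * of_int (SI_minus I N))"
proof -
  define c where "c J K = \<chi> (Pair 0 ` J \<union> Pair 1 ` K)" for J K
  have suppM: "\<And>M. \<chi> M \<noteq> 0 \<Longrightarrow> finite M \<and> fst ` M \<subseteq> {0,1} \<and> card M = r \<and> 1 \<le> card {g\<in>M. fst g = 0} \<and> card {g\<in>M. fst g = 0} \<le> r - 1"
  proof -
    fix M assume "\<chi> M \<noteq> 0"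
    hence "M \<in> ext_supp \<chi>" by (simp add: ext_supp_def)
    from bideg this show "finite M \<and> fst ` M \<subseteq> {0,1} \<and> card M = r \<and> 1 \<le> card {g\<in>M. fst g = 0} \<and> card {g\<in>M. fst g = 0} \<le> r - 1"
      by (rule bspec)
  qed
  have inj0: "inj (Pair (0::nat))" and inj1: "inj (Pair (1::nat))" by (simp_all add: inj_on_def)
  have H2: "\<And>J K. c J K \<noteq> 0 \<Longrightarrow> finite J \<and> finite K \<and> J \<noteq> {} \<and> K \<noteq> {} \<and> card J + card K = r"
  proof -
    fix J K :: "'i set" assume "c J K \<noteq> 0"
    hence "\<chi> (Pair 0 ` J \<union> Pair 1 ` K) \<noteq> 0" unfolding c_def .
    note s = suppM[OF this]
    have "finite (Pair (0::nat) ` J)" "finite (Pair (1::nat) ` K)" using conjunct1[OF s] by simp_all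
    hence fJ: "finite J" and fK: "finite K"
      using finite_imageD[OF _ inj_on_subset[OF inj0]] finite_imageD[OF _ inj_on_subset[OF inj1]] by blast+
    have e0: "{g\<in>Pair 0 ` J \<union> Pair 1 ` K. fst g = 0} = Pair (0::nat) ` J" by auto
    have cJ: "card (Pair (0::nat) ` J) = card J" by (rule card_image) (rule inj_on_subset[OF inj0], simp)
    have cK: "card (Pair (1::nat) ` K) = card K" by (rule card_image) (rule inj_on_subset[OF inj1], simp)
    have "card (Pair (0::nat) ` J \<union> Pair 1 ` K) = card (Pair (0::nat) ` J) + card (Pair (1::nat) ` K)"
      by (rule card_Un_disjoint) (use fJ fK in auto)
    hence cr: "card J + card K = r" using s cJ cK by simp
    have "1 \<le> card J" "card J \<le> r - 1" using s unfolding e0 cJ by simp_all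
    hence "J \<noteq> {}" "K \<noteq> {}" using cr fK by auto
    thus "finite J \<and> finite K \<and> J \<noteq> {} \<and> K \<noteq> {} \<and> card J + card K = r"
      using fJ fK cr by blast
  qed
  have Mdec: "\<And>M. M \<in> ext_supp \<chi> \<Longrightarrow> M = Pair 0 ` {i. (0,i)\<in>M} \<union> Pair 1 ` {i. (1,i)\<in>M} \<and> finite {i. (0::nat,i)\<in>M} \<and> finite {i. (1::nat,i)\<in>M}"
  proof -
    fix M assume "M \<in> ext_supp \<chi>"
    hence "\<chi> M \<noteq> 0" by (simp add: ext_supp_def)
    note s0 = suppM[OF this]
    have s: "finite M" "fst ` M \<subseteq> {0,1}" using s0 by simp_all
    have d: "M = Pair 0 ` {i. (0,i)\<in>M} \<union> Pair 1 ` {i. (1,i)\<in>M}" using s(2) by (rule decomp)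
    have f0: "finite (Pair (0::nat) ` {i. (0::nat,i)\<in>M})" by (rule finite_subset[OF _ s(1)]) auto
    have f1: "finite (Pair (1::nat) ` {i. (1::nat,i)\<in>M})" by (rule finite_subset[OF _ s(1)]) auto
    have "finite {i. (0::nat,i)\<in>M}" "finite {i. (1::nat,i)\<in>M}"
      using finite_imageD[OF f0 inj_on_subset[OF inj0 subset_UNIV]] finite_imageD[OF f1 inj_on_subset[OF inj1 subset_UNIV]] .
    thus "M = Pair 0 ` {i. (0,i)\<in>M} \<union> Pair 1 ` {i. (1,i)\<in>M} \<and> finite {i. (0::nat,i)\<in>M} \<and> finite {i. (1::nat,i)\<in>M}"
      using d by blast
  qed
  have H1: "\<And>X Y Z. finite X \<Longrightarrow> finite Y \<Longrightarrow> finite Z \<Longrightarrow> X \<noteq> {} \<Longrightarrow> Y \<noteq> {} \<Longrightarrow> Z \<noteq> {} \<Longrightarrow>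
          c (X \<union> Y) Z * of_int (ext_sign X Y) = c X (Y \<union> Z) * of_int (ext_sign Y Z)"
  proof -
    fix X Y Z :: "'i set"
    assume f: "finite X" "finite Y" "finite Z" and n: "X \<noteq> {}" "Y \<noteq> {}" "Z \<noteq> {}"
    let ?N = "Pair 0 ` X \<union> Pair 1 ` Y \<union> Pair (2::nat) ` Z"
    have a: "alpha_map \<chi> ?N = 0"
      unfolding alpha_map_def ext_map_def
    proof (rule sum.neutral, rule ballI)
      fix M assume M: "M \<in> ext_supp \<chi>"
      let ?J = "{i. (0::nat,i)\<in>M}" and ?K = "{i. (1::nat,i)\<in>M}"
      have dM: "M = Pair 0 ` ?J \<union> Pair 1 ` ?K" "finite ?J" "finite ?K" using Mdec[OF M] by blast+
      have "ext_subst sig_alpha M ?N = ext_subst sig_alpha (Pair 0 ` ?J \<union> Pair 1 ` ?K) ?N"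
        using dM(1) by (rule arg_cong[where f="\<lambda>M. ext_subst sig_alpha M ?N"])
      also have "\<dots> = 0" by (rule eval_alpha[OF dM(2,3) n(3)])
      finally have "ext_subst sig_alpha M ?N = 0" .
      thus "\<chi> M * of_int (ext_subst sig_alpha M ?N) = 0" by simp
    qed
    have dl: "delta_map \<chi> ?N = 0"
      unfolding delta_map_def ext_map_def
    proof (rule sum.neutral, rule ballI)
      fix M assume M: "M \<in> ext_supp \<chi>"
      let ?J = "{i. (0::nat,i)\<in>M}" and ?K = "{i. (1::nat,i)\<in>M}"
      have dM: "M = Pair 0 ` ?J \<union> Pair 1 ` ?K" "finite ?J" "finite ?K" using Mdec[OF M] by blast+
      have "ext_subst sig_delta M ?N = ext_subst sig_delta (Pair 0 ` ?J \<union> Pair 1 ` ?K) ?N"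
        using dM(1) by (rule arg_cong[where f="\<lambda>M. ext_subst sig_delta M ?N"])
      also have "\<dots> = 0" by (rule eval_delta[OF dM(2,3) n(1)])
      finally have "ext_subst sig_delta M ?N = 0" .
      thus "\<chi> M * of_int (ext_subst sig_delta M ?N) = 0" by simp
    qed
    have b: "beta_map \<chi> ?N = c (X \<union> Y) Z * of_int (ext_sign X Y)"
      unfolding beta_map_def ext_map_def
    proof (rule sum_point[OF fin])
      fix M assume M: "M \<in> ext_supp \<chi>"
      let ?J = "{i. (0::nat,i)\<in>M}" and ?K = "{i. (1::nat,i)\<in>M}"
      have dM: "M = Pair 0 ` ?J \<union> Pair 1 ` ?K" "finite ?J" "finite ?K" using Mdec[OF M] by blast+
      have "ext_subst sig_beta M ?N = ext_subst sig_beta (Pair 0 ` ?J \<union> Pair 1 ` ?K) ?N"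
        using dM(1) by (rule arg_cong[where f="\<lambda>M. ext_subst sig_beta M ?N"])
      also have "\<dots> = (if ?J = X \<union> Y \<and> ?K = Z then ext_sign X Y else 0)" by (rule eval_beta[OF dM(2,3)])
      finally have ev: "ext_subst sig_beta M ?N = (if ?J = X \<union> Y \<and> ?K = Z then ext_sign X Y else 0)" .
      have iff: "(?J = X \<union> Y \<and> ?K = Z) = (M = Pair 0 ` (X \<union> Y) \<union> Pair 1 ` Z)"
      proof
        assume h: "?J = X \<union> Y \<and> ?K = Z"
        have "M = Pair 0 ` ?J \<union> Pair 1 ` ?K" by (rule dM(1))
        also have "\<dots> = Pair 0 ` (X \<union> Y) \<union> Pair 1 ` Z" using h by (simp only:)
        finally show "M = Pair 0 ` (X \<union> Y) \<union> Pair 1 ` Z" .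
      next
        assume h: "M = Pair 0 ` (X \<union> Y) \<union> Pair 1 ` Z" show "?J = X \<union> Y \<and> ?K = Z" by (simp only: h parts simp_thms)
      qed
      show "\<chi> M * of_int (ext_subst sig_beta M ?N) = (if M = Pair 0 ` (X \<union> Y) \<union> Pair 1 ` Z then c (X \<union> Y) Z * of_int (ext_sign X Y) else 0)"
        unfolding ev iff c_def by simp
    next
      assume "Pair 0 ` (X \<union> Y) \<union> Pair 1 ` Z \<notin> ext_supp \<chi>"
      thus "c (X \<union> Y) Z * of_int (ext_sign X Y) = 0" unfolding c_def ext_supp_def by simp
    qed
    have g: "gamma_map \<chi> ?N = c X (Y \<union> Z) * of_int (ext_sign Y Z)"
      unfolding gamma_map_def ext_map_def
    proof (rule sum_point[OF fin])
      fix M assume M: "M \<in> ext_supp \<chi>"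
      let ?J = "{i. (0::nat,i)\<in>M}" and ?K = "{i. (1::nat,i)\<in>M}"
      have dM: "M = Pair 0 ` ?J \<union> Pair 1 ` ?K" "finite ?J" "finite ?K" using Mdec[OF M] by blast+
      have "ext_subst sig_gamma M ?N = ext_subst sig_gamma (Pair 0 ` ?J \<union> Pair 1 ` ?K) ?N"
        using dM(1) by (rule arg_cong[where f="\<lambda>M. ext_subst sig_gamma M ?N"])
      also have "\<dots> = (if ?J = X \<and> ?K = Y \<union> Z then ext_sign Y Z else 0)" by (rule eval_gamma[OF dM(2,3)])
      finally have ev: "ext_subst sig_gamma M ?N = (if ?J = X \<and> ?K = Y \<union> Z then ext_sign Y Z else 0)" .
      have iff: "(?J = X \<and> ?K = Y \<union> Z) = (M = Pair 0 ` X \<union> Pair 1 ` (Y \<union> Z))"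
      proof
        assume h: "?J = X \<and> ?K = Y \<union> Z"
        have "M = Pair 0 ` ?J \<union> Pair 1 ` ?K" by (rule dM(1))
        also have "\<dots> = Pair 0 ` X \<union> Pair 1 ` (Y \<union> Z)" using h by (simp only:)
        finally show "M = Pair 0 ` X \<union> Pair 1 ` (Y \<union> Z)" .
      next
        assume h: "M = Pair 0 ` X \<union> Pair 1 ` (Y \<union> Z)" show "?J = X \<and> ?K = Y \<union> Z" by (simp only: h parts simp_thms)
      qed
      show "\<chi> M * of_int (ext_subst sig_gamma M ?N) = (if M = Pair 0 ` X \<union> Pair 1 ` (Y \<union> Z) then c X (Y \<union> Z) * of_int (ext_sign Y Z) else 0)"
        unfolding ev iff c_def by simp
    next
      assume "Pair 0 ` X \<union> Pair 1 ` (Y \<union> Z) \<notin> ext_supp \<chi>"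
      thus "c X (Y \<union> Z) * of_int (ext_sign Y Z) = 0" unfolding c_def ext_supp_def by simp
    qed
    have "alpha_map \<chi> ?N + beta_map \<chi> ?N = gamma_map \<chi> ?N + delta_map \<chi> ?N"
      using fun_cong[OF eq, of ?N] by simp
    thus "c (X \<union> Y) Z * of_int (ext_sign X Y) = c X (Y \<union> Z) * of_int (ext_sign Y Z)"
      using a b g dl by simp
  qed
  note ov = overlap[OF r3 H1 H2]
  note ky = key[OF r3 H1 H2]
  note bbd = bb_def[OF r3 H1 H2]
  note dd = d_def[OF r3 H1 H2]
  define b where "b = bb c r"
  have bval: "\<And>I. b I = (if finite I \<and> card I = r then d c {Min I} (I - {Min I}) else 0)"
    unfolding b_def by (rule bbd)
  have bdef: "\<And>I. b I \<noteq> 0 \<Longrightarrow> finite I \<and> card I = r"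
    unfolding bval by (auto split: if_splits)
  have suppb_fin: "finite (ext_supp b)"
  proof -
    have "ext_supp b \<subseteq> (\<lambda>M. snd ` M) ` ext_supp \<chi>"
    proof
      fix I assume "I \<in> ext_supp b"
      hence bI: "b I \<noteq> 0" by (simp add: ext_supp_def)
      hence fI: "finite I" "card I = r" using bdef by blast+
      have "I \<noteq> {}" using fI r3 by auto
      hence mI: "Min I \<in> I" using fI by (intro Min_in) auto
      have "d c {Min I} (I - {Min I}) \<noteq> 0" using bI fI by (simp add: bval)
      hence "c {Min I} (I - {Min I}) \<noteq> 0" by (cases "c {Min I} (I - {Min I}) = 0") (simp_all add: dd)
      hence M: "Pair 0 ` {Min I} \<union> Pair 1 ` (I - {Min I}) \<in> ext_supp \<chi>" unfolding c_def ext_supp_def by simp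
      have "I = snd ` (Pair (0::nat) ` {Min I} \<union> Pair (1::nat) ` (I - {Min I}))" using snd_img[OF mI] by simp
      thus "I \<in> (\<lambda>M. snd ` M) ` ext_supp \<chi>" using M by (rule image_eqI)
    qed
    thus ?thesis by (rule finite_subset[OF _ finite_imageI[OF fin]])
  qed
  have rep: "\<And>N. \<chi> N = (\<Sum>I\<in>ext_supp b. b I * of_int (SI_minus I N))"
  proof -
    fix N :: "(nat \<times> 'i) set"
    let ?J = "{i. (0::nat,i)\<in>N}" and ?K = "{i. (1::nat,i)\<in>N}"
    let ?Q = "\<forall>x\<in>N. fst x = 0 \<or> fst x = 1"
    let ?P = "?Q \<and> ?J \<noteq> {} \<and> ?K \<noteq> {}"
    have SI: "\<And>I. I \<in> ext_supp b \<Longrightarrow> SI_minus I N = (if ?P \<and> ?J \<union> ?K = I then ext_sign ?J ?K else 0)"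
    proof -
      fix I assume "I \<in> ext_supp b"
      hence "b I \<noteq> 0" by (simp add: ext_supp_def)
      hence fI: "finite I" and cI: "card I = r" using bdef by blast+
      hence nI: "I \<noteq> {}" using r3 by auto
      have S: "S_mon I N = (if ?Q \<and> ?J \<union> ?K = I then ext_sign ?J ?K else 0)" by (rule S_mon_eval[OF fI])
      have w: "w_mon I N = (if N = Pair 0 ` I then 1 else 0)" by (simp add: w_mon_def)
      have w': "w'_mon I N = (if N = Pair 1 ` I then 1 else 0)" by (simp add: w'_mon_def)
      show "SI_minus I N = (if ?P \<and> ?J \<union> ?K = I then ext_sign ?J ?K else 0)"
      proof (cases "?Q \<and> ?J \<union> ?K = I")
        case True
        have dN: "N = Pair 0 ` ?J \<union> Pair 1 ` ?K" by (rule decomp[OF Q_fst[OF conjunct1[OF True]]])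
        consider (a) "?J = {}" | (b) "?K = {}" | (c) "?J \<noteq> {}" "?K \<noteq> {}" by blast
        thus ?thesis
        proof cases
          case a
          hence KI: "?K = I" using True by blast
          from dN have "N = Pair 0 ` {} \<union> Pair 1 ` I" by (simp only: a KI)
          hence NI: "N = Pair 1 ` I" by simp
          have s1: "ext_sign ?J ?K = 1" using a by (intro sign_lt) simp
          have n0: "N \<noteq> Pair 0 ` I" using NI ne01[OF nI] by simp
          have np: "\<not> (?P \<and> ?J \<union> ?K = I)" using a by blast
          show ?thesis unfolding SI_minus_def S w w'
            by (simp only: if_P[OF True] if_not_P[OF n0] if_P[OF NI] if_not_P[OF np] s1, simp?)
        next
          case b
          hence JI: "?J = I" using True by blast
          from dN have "N = Pair 0 ` I \<union> Pair 1 ` {}" by (simp only: b JI)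
          hence NI: "N = Pair 0 ` I" by simp
          have s1: "ext_sign ?J ?K = 1" using b by (intro sign_lt) simp
          have n1: "N \<noteq> Pair 1 ` I" using NI ne01[OF nI] by simp
          have np: "\<not> (?P \<and> ?J \<union> ?K = I)" using b by blast
          show ?thesis unfolding SI_minus_def S w w'
            by (simp only: if_P[OF True] if_not_P[OF n1] if_P[OF NI] if_not_P[OF np] s1, simp?)
        next
          case c
          have n0: "N \<noteq> Pair 0 ` I" using c(2) by (rule K_ne)
          have n1: "N \<noteq> Pair 1 ` I" using c(1) by (rule J_ne)
          have pp: "?P \<and> ?J \<union> ?K = I" using True c by blast
          show ?thesis unfolding SI_minus_def S w w'
            by (simp only: if_P[OF True] if_not_P[OF n0] if_not_P[OF n1] if_P[OF pp], simp?)
        qed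
      next
        case False
        have n0: "N \<noteq> Pair 0 ` I"
        proof
          assume "N = Pair 0 ` I"
          from False P0_facts[OF this] show False by (rule notE)
        qed
        have n1: "N \<noteq> Pair 1 ` I"
        proof
          assume "N = Pair 1 ` I"
          from False P1_facts[OF this] show False by (rule notE)
        qed
        have np: "\<not> (?P \<and> ?J \<union> ?K = I)" using False by blast
        show ?thesis unfolding SI_minus_def S w w'
          by (simp only: if_not_P[OF False] if_not_P[OF n0] if_not_P[OF n1] if_not_P[OF np], simp?)
      qed
    qed
    have sumeq: "(\<Sum>I\<in>ext_supp b. b I * of_int (SI_minus I N)) = (if ?P then b (?J \<union> ?K) * of_int (ext_sign ?J ?K) else 0)"
    proof (rule sum_point[OF suppb_fin])
      fix I assume I: "I \<in> ext_supp b"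
      show "b I * of_int (SI_minus I N) = (if I = ?J \<union> ?K then (if ?P then b (?J \<union> ?K) * of_int (ext_sign ?J ?K) else 0) else 0)"
        unfolding SI[OF I] by auto
    next
      assume "?J \<union> ?K \<notin> ext_supp b"
      thus "(if ?P then b (?J \<union> ?K) * of_int (ext_sign ?J ?K) else 0) = 0" by (simp add: ext_supp_def)
    qed
    have "\<chi> N = (if ?P then b (?J \<union> ?K) * of_int (ext_sign ?J ?K) else 0)"
    proof (cases ?P)
      case False
      show ?thesis
      proof (rule ccontr)
        assume ne: "\<chi> N \<noteq> (if ?P then b (?J \<union> ?K) * of_int (ext_sign ?J ?K) else 0)"
        have "(if ?P then b (?J \<union> ?K) * of_int (ext_sign ?J ?K) else 0) = 0" by (rule if_not_P[OF False])
        hence nz: "\<chi> N \<noteq> 0" using ne by (simp only: not_False_eq_True)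
        hence "fst ` N \<subseteq> {0,1}" using conjunct1[OF conjunct2[OF suppM[OF nz]]] by simp
        hence Q: ?Q by (rule fst_Q)
        have dN: "N = Pair 0 ` ?J \<union> Pair 1 ` ?K" by (rule decomp[OF Q_fst[OF Q]])
        have "c ?J ?K = \<chi> N" unfolding c_def by (rule arg_cong[where f=\<chi>, OF dN[symmetric]])
        hence cz: "c ?J ?K \<noteq> 0" using nz by simp
        have "?J \<noteq> {} \<and> ?K \<noteq> {}" using H2[OF cz] by simp
        thus False using False Q by blast
      qed
    next
      case True
      have dN: "N = Pair 0 ` ?J \<union> Pair 1 ` ?K" by (rule decomp[OF Q_fst[OF conjunct1[OF True]]])
      have cN: "\<chi> N = c ?J ?K" unfolding c_def by (rule arg_cong[where f=\<chi>, OF dN])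
      show ?thesis
      proof (cases "?J \<inter> ?K = {}")
        case False
        have "c ?J ?K = 0" by (rule overlap[OF r3 H1 H2 False])
        moreover have "ext_sign ?J ?K = 0" using False by (rule sign_zero)
        ultimately show ?thesis using cN by simp
      next
        case dis: True
        show ?thesis
        proof (cases "finite ?J \<and> finite ?K \<and> card (?J \<union> ?K) = r")
          case True
          hence "c ?J ?K = bb c r (?J \<union> ?K) * of_int (ext_sign ?J ?K)"
            using \<open>?P\<close> dis by (intro ky) auto
          thus ?thesis using cN \<open>?P\<close> unfolding b_def by simp
        next
          case False
          have c0: "c ?J ?K = 0"
          proof (rule ccontr)
            assume cz: "c ?J ?K \<noteq> 0"
            have h: "finite ?J \<and> finite ?K \<and> card ?J + card ?K = r" using H2[OF cz] by simp
            hence "card (?J \<union> ?K) = card ?J + card ?K" using dis by (intro card_Un_disjoint) auto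
            thus False using h False by simp
          qed
          have b0: "b (?J \<union> ?K) = 0"
          proof (rule ccontr)
            assume "b (?J \<union> ?K) \<noteq> 0"
            hence "finite (?J \<union> ?K) \<and> card (?J \<union> ?K) = r" by (rule bdef)
            thus False using False by simp
          qed
          show ?thesis using cN c0 b0 \<open>?P\<close> by simp
        qed
      qed
    qed
    thus "\<chi> N = (\<Sum>I\<in>ext_supp b. b I * of_int (SI_minus I N))" using sumeq by simp
  qed
  show ?thesis
  proof (intro exI[of _ b] conjI)
    show "finite (ext_supp b)" by (rule suppb_fin)
    show "\<forall>I\<in>ext_supp b. finite I \<and> card I = r" using bdef by (simp add: ext_supp_def)
    show "\<chi> = (\<lambda>N. \<Sum>I\<in>ext_supp b. b I * of_int (SI_minus I N))" using rep by (rule ext)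
  qed
qed


end
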